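(* Let $\mathcal{A}=(Q,\delta,I,F)$ be a complete Büchi automaton and let $p,q\in Q$ with $p\preceq_{\mathit{de}}q$. Let $L_\top=\{w\in\Sigma^*\mid p\overset{w}{\leadsto}_F q\}$ and $L_\bot=\{w\in\Sigma^*\mid p\overset{w}{\leadsto}q\}$. Then $\mathcal{L}(q)\supseteq(L_\bot^*L_\top)^\omega$.
   Context: A Büchi automaton is $\mathcal{A}=(Q,\delta,I,F)$ over a finite alphabet $\Sigma$ with $\delta:Q\times\Sigma\to2^Q$, complete if $\delta(q,a)\neq\emptyset$ always. A run from $q$ on $\alpha=\alpha_0\alpha_1\cdots$ is $\rho$ with $\rho_0=q$, $\rho_{i+1}\in\delta(\rho_i,\alpha_i)$; it is accepting if some state of $F$ occurs infinitely often. $\mathcal{L}(q)$ is the set of infinite words with an accepting run from $q$. For $w\in\Sigma^*$, $p\overset{w}{\leadsto}q$ means $q$ is reachable from $p$ by a path reading $w$, and $p\overset{w}{\leadsto}_F q$ means there is such a path that contains an accepting state. For $L\subseteq\Sigma^*$: $L^*$ is the set of finite concatenations of words of $L$, $L_1L_2=\{w_1w_2\mid w_i\in L_i\}$, and $L^\omega=\{w_1w_2\cdots\in\Sigma^\omega\mid w_i\in L\}$. Delayed simulation: in the game from $(p_0,r_0)$, in round $i$ Spoiler picks $p_i\xrightarrow{\alpha_i}p_{i+1}$ and Duplicator answers $r_i\xrightarrow{\alpha_i}r_{i+1}$; a Duplicator strategy is a map $\sigma$ with $\sigma(r,p\xrightarrow{a}p')\in\delta(r,a)$ (no lookahead). Duplicator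 wins if for all $i$, $p_i\in F$ implies $r_k\in F$ for some $k\ge i$. $p\preceq_{\mathit{de}}r$ iff Duplicator has a winning strategy from $(p,r)$. *)

theory Defs
  imports "HOL-Library.Omega_Words_Fun"
begin

text \<open>The state set Q is UNIV :: 'q set, delta :: 'q => 'a => 'q set, F the accepting states.
  (Initial states play no role in the statement.)\<close>

definition complete_aut :: "('q \<Rightarrow> 'a \<Rightarrow> 'q set) \<Rightarrow> bool" where
  "complete_aut \<delta> \<longleftrightarrow> (\<forall>q a. \<delta> q a \<noteq> {})"

definition is_run :: "('q \<Rightarrow> 'a \<Rightarrow> 'q set) \<Rightarrow> 'q \<Rightarrow> 'a word \<Rightarrow> 'q word \<Rightarrow> bool" where
  "is_run \<delta> q \<alpha> \<rho> \<longleftrightarrow> \<rho> 0 = q \<and> (\<forall>i. \<rho> (Suc i) \<in> \<delta> (\<rho> i) (\<alpha> i))"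

definition accepting :: "'q set \<Rightarrow> 'q word \<Rightarrow> bool" where
  "accepting F \<rho> \<longleftrightarrow> (\<exists>q\<in>F. \<exists>\<^sub>\<infinity>i. \<rho> i = q)"

definition lang :: "('q \<Rightarrow> 'a \<Rightarrow> 'q set) \<Rightarrow> 'q set \<Rightarrow> 'q \<Rightarrow> 'a word set" where
  "lang \<delta> F q = {\<alpha>. \<exists>\<rho>. is_run \<delta> q \<alpha> \<rho> \<and> accepting F \<rho>}"

definition is_path :: "('q \<Rightarrow> 'a \<Rightarrow> 'q set) \<Rightarrow> 'q \<Rightarrow> 'a list \<Rightarrow> 'q \<Rightarrow> 'q list \<Rightarrow> bool" where
  "is_path \<delta> p w q rs \<longleftrightarrow> length rs = Suc (length w) \<and> rs ! 0 = p \<and> rs ! length w = q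
     \<and> (\<forall>i < length w. rs ! Suc i \<in> \<delta> (rs ! i) (w ! i))"

definition reach :: "('q \<Rightarrow> 'a \<Rightarrow> 'q set) \<Rightarrow> 'q \<Rightarrow> 'a list \<Rightarrow> 'q \<Rightarrow> bool" where
  "reach \<delta> p w q \<longleftrightarrow> (\<exists>rs. is_path \<delta> p w q rs)"

definition reachF :: "('q \<Rightarrow> 'a \<Rightarrow> 'q set) \<Rightarrow> 'q set \<Rightarrow> 'q \<Rightarrow> 'a list \<Rightarrow> 'q \<Rightarrow> bool" where
  "reachF \<delta> F p w q \<longleftrightarrow> (\<exists>rs. is_path \<delta> p w q rs \<and> (\<exists>r\<in>set rs. r \<in> F))"

definition lconc :: "'a list set \<Rightarrow> 'a list set \<Rightarrow> 'a list set" where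
  "lconc L1 L2 = {w1 @ w2 | w1 w2. w1 \<in> L1 \<and> w2 \<in> L2}"

definition lstar :: "'a list set \<Rightarrow> 'a list set" where
  "lstar L = {concat ws | ws. set ws \<subseteq> L}"

text \<open>L^omega: infinite words that are infinite concatenations of words of L.
  Empty factors contribute nothing, so we take the factors nonempty.\<close>
definition lomega :: "'a list set \<Rightarrow> 'a word set" where
  "lomega L = {\<alpha>. \<exists>ws :: nat \<Rightarrow> 'a list. (\<forall>i. ws i \<in> L \<and> ws i \<noteq> []) \<and>
      (\<forall>n. prefix (length (concat (map ws [0..<n]))) \<alpha> = concat (map ws [0..<n]))}"

text \<open>Delayed simulation game with memoryless Duplicator strategies
  sigma r p a p' (Duplicator at r, Spoiler moved p -a-> p').\<close>
definition legal_strategy :: "('q \<Rightarrow> 'a \<Rightarrow> 'q set) \<Rightarrow> ('q \<Rightarrow> 'q \<Rightarrow> 'a \<Rightarrow> 'q \<Rightarrow> 'q) \<Rightarrow> bool" where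
  "legal_strategy \<delta> \<sigma> \<longleftrightarrow> (\<forall>r p a p'. p' \<in> \<delta> p a \<longrightarrow> \<sigma> r p a p' \<in> \<delta> r a)"

definition dup_play :: "('q \<Rightarrow> 'q \<Rightarrow> 'a \<Rightarrow> 'q \<Rightarrow> 'q) \<Rightarrow> 'q \<Rightarrow> 'q word \<Rightarrow> 'a word \<Rightarrow> 'q word" where
  "dup_play \<sigma> r ps \<alpha> = rec_nat r (\<lambda>i x. \<sigma> x (ps i) (\<alpha> i) (ps (Suc i)))"

definition winning_de :: "('q \<Rightarrow> 'a \<Rightarrow> 'q set) \<Rightarrow> 'q set \<Rightarrow> ('q \<Rightarrow> 'q \<Rightarrow> 'a \<Rightarrow> 'q \<Rightarrow> 'q) \<Rightarrow> 'q \<Rightarrow> 'q \<Rightarrow> bool" where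
  "winning_de \<delta> F \<sigma> p r \<longleftrightarrow> (\<forall>\<alpha> ps. is_run \<delta> p \<alpha> ps \<longrightarrow>
     (let rs = dup_play \<sigma> r ps \<alpha> in \<forall>i. ps i \<in> F \<longrightarrow> (\<exists>k\<ge>i. rs k \<in> F)))"

definition de_sim :: "('q \<Rightarrow> 'a \<Rightarrow> 'q set) \<Rightarrow> 'q set \<Rightarrow> 'q \<Rightarrow> 'q \<Rightarrow> bool" where
  "de_sim \<delta> F p r \<longleftrightarrow> (\<exists>\<sigma>. legal_strategy \<delta> \<sigma> \<and> winning_de \<delta> F \<sigma> p r)"

end

theory Submission
  imports Defs
begin


lemma concat_nth_take:
  "r < length xss \<Longrightarrow> k < length (xss ! r) \<Longrightarrow> concat xss ! (length (concat (take r xss)) + k) = xss ! r ! k"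
proof -
  assume a: "r < length xss" "k < length (xss ! r)"
  have "xss = take r xss @ xss ! r # drop (Suc r) xss" using a by (simp add: id_take_nth_drop)
  then have "concat xss = concat (take r xss) @ xss ! r @ concat (drop (Suc r) xss)"
    by (metis concat.simps(2) concat_append)
  then show ?thesis using a by (simp add: nth_append)
qed

fun nxt :: "(nat \<Rightarrow> 'a list list) \<Rightarrow> nat \<times> nat \<Rightarrow> nat \<times> nat" where
  "nxt segs (i, r) = (if Suc r < length (segs i) then (i, Suc r) else (Suc i, 0))"

primrec pos :: "(nat \<Rightarrow> 'a list list) \<Rightarrow> nat \<Rightarrow> nat \<times> nat" where
  "pos segs 0 = (0, 0)"
| "pos segs (Suc j) = nxt segs (pos segs j)"

primrec CC :: "(nat \<Rightarrow> 'a list list) \<Rightarrow> nat \<Rightarrow> nat" where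
  "CC segs 0 = 0"
| "CC segs (Suc i) = CC segs i + length (concat (segs i))"

locale flat =
  fixes segs :: "nat \<Rightarrow> 'a list list" and \<alpha> :: "'a word"
  assumes ne: "\<And>i. segs i \<noteq> []"
    and nes: "\<And>i s. s \<in> set (segs i) \<Longrightarrow> s \<noteq> []"
    and alph: "\<And>i k. k < length (concat (segs i)) \<Longrightarrow> \<alpha> (CC segs i + k) = concat (segs i) ! k"
begin

definition bb :: "nat \<Rightarrow> nat" where
  "bb j = CC segs (fst (pos segs j)) + length (concat (take (snd (pos segs j)) (segs (fst (pos segs j)))))"

definition sg :: "nat \<Rightarrow> 'a list" where
  "sg j = segs (fst (pos segs j)) ! snd (pos segs j)"

lemma pos_inv: "snd (pos segs j) < length (segs (fst (pos segs j)))"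
proof (induction j)
  case 0 then show ?case using ne[of 0] by simp
next
  case (Suc j)
  obtain i r where e: "pos segs j = (i, r)" by fastforce
  show ?case using e ne[of "Suc i"] by simp
qed

lemma sg_in: "sg j \<in> set (segs (fst (pos segs j)))"
  unfolding sg_def using pos_inv by simp

lemma bb_Suc: "bb (Suc j) = bb j + length (sg j)"
proof -
  obtain i r where e: "pos segs j = (i, r)" by fastforce
  have r: "r < length (segs i)" using pos_inv[of j] e by simp
  show ?thesis
  proof (cases "Suc r < length (segs i)")
    case True
    then show ?thesis using e r unfolding bb_def sg_def by (simp add: take_Suc_conv_app_nth)
  next
    case False
    then have rr: "Suc r = length (segs i)" using r by simp
    have "length (concat (segs i)) = length (concat (take (Suc r) (segs i)))" using rr by simp
    also have "\<dots> = length (concat (take r (segs i))) + length (segs i ! r)"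
      using r by (simp add: take_Suc_conv_app_nth)
    finally show ?thesis using e False unfolding bb_def sg_def by simp
  qed
qed

lemma bb0: "bb 0 = 0" unfolding bb_def by simp

lemma bb_mono: "strict_mono bb"
  unfolding strict_mono_Suc_iff
proof
  fix j
  have "sg j \<noteq> []" using nes sg_in by blast
  then show "bb j < bb (Suc j)" using bb_Suc by simp
qed

lemma sg_alpha: "map \<alpha> [bb j..<bb (Suc j)] = sg j"
proof -
  obtain i r where e: "pos segs j = (i, r)" by fastforce
  have r: "r < length (segs i)" using pos_inv[of j] e by simp
  have len: "length (map \<alpha> [bb j..<bb (Suc j)]) = length (sg j)" using bb_Suc by simp
  show ?thesis
  proof (rule nth_equalityI)
    show "length (map \<alpha> [bb j..<bb (Suc j)]) = length (sg j)" by (rule len)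
    fix k assume k: "k < length (map \<alpha> [bb j..<bb (Suc j)])"
    then have k': "k < length (segs i ! r)" using len e unfolding sg_def by simp
    have lt: "length (concat (take r (segs i))) + k < length (concat (segs i))"
    proof -
      have "length (concat (segs i)) = length (concat (take r (segs i) @ segs i ! r # drop (Suc r) (segs i)))"
        using r by (simp add: id_take_nth_drop[symmetric])
      then show ?thesis using k' by simp
    qed
    have "map \<alpha> [bb j..<bb (Suc j)] ! k = \<alpha> (bb j + k)" using k by simp
    also have "\<dots> = \<alpha> (CC segs i + (length (concat (take r (segs i))) + k))"
      unfolding bb_def using e by (simp add: add.assoc)
    also have "\<dots> = concat (segs i) ! (length (concat (take r (segs i))) + k)" using alph lt by blast
    also have "\<dots> = segs i ! r ! k" using concat_nth_take r k' by blast
    finally show "map \<alpha> [bb j..<bb (Suc j)] ! k = sg j ! k" unfolding sg_def using e by simp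
  qed
qed

lemma fst_pos_le: "fst (pos segs j) \<le> j"
proof (induction j)
  case 0 then show ?case by simp
next
  case (Suc j)
  obtain i r where e: "pos segs j = (i, r)" by fastforce
  then show ?case using Suc by simp
qed

lemma pos_hit: "\<exists>j. pos segs j = (i, length (segs i) - 1)"
proof -
  have start: "\<exists>j. pos segs j = (i, 0)"
  proof (induction i)
    case 0 then show ?case by (intro exI[of _ 0]) simp
  next
    case (Suc i)
    then obtain j0 where j0: "pos segs j0 = (i, 0)" by blast
    have walk: "r < length (segs i) \<Longrightarrow> pos segs (j0 + r) = (i, r)" for r
    proof (induction r)
      case 0 then show ?case using j0 by simp
    next
      case (Suc r) then show ?case by simp
    qed
    have "length (segs i) - 1 < length (segs i)" using ne[of i] by simp
    then have "pos segs (Suc (j0 + (length (segs i) - 1))) = (Suc i, 0)"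
      using walk[of "length (segs i) - 1"] ne[of i] by simp
    then show ?case by blast
  qed
  then obtain j0 where j0: "pos segs j0 = (i, 0)" by blast
  have walk: "r < length (segs i) \<Longrightarrow> pos segs (j0 + r) = (i, r)" for r
  proof (induction r)
    case 0 then show ?case using j0 by simp
  next
    case (Suc r) then show ?case by simp
  qed
  have "length (segs i) - 1 < length (segs i)" using ne[of i] by simp
  then show ?thesis using walk[of "length (segs i) - 1"] by blast
qed

lemma last_often: "\<exists>\<^sub>\<infinity>j. sg j = last (segs (fst (pos segs j)))"
  unfolding INFM_nat
proof
  fix m
  obtain j where j: "pos segs j = (Suc m, length (segs (Suc m)) - 1)" using pos_hit by blast
  have "Suc m \<le> j" using fst_pos_le[of j] j by simp
  moreover have "sg j = last (segs (fst (pos segs j)))" unfolding sg_def using j ne[of "Suc m"]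
    by (simp add: last_conv_nth)
  ultimately show "\<exists>n>m. sg n = last (segs (fst (pos segs n)))" by (intro exI[of _ j]) auto
qed

end


primrec dn :: "('q \<Rightarrow> 'q \<Rightarrow> 'a \<Rightarrow> 'q \<Rightarrow> 'q) \<Rightarrow> (nat \<Rightarrow> 'q) \<Rightarrow> nat \<Rightarrow> 'q \<Rightarrow> 'a \<Rightarrow> nat \<Rightarrow> 'q" where
  "dn \<sigma> v t x a 0 = x"
| "dn \<sigma> v t x a (Suc d) = \<sigma> (v (t - Suc d)) (v (t - d)) a (dn \<sigma> v t x a d)"

lemma dn_step: "k < t \<Longrightarrow> dn \<sigma> v t x a (t - k) = \<sigma> (v k) (v (Suc k)) a (dn \<sigma> v t x a (t - Suc k))"
proof -
  assume "k < t"
  then have "t - k = Suc (t - Suc k)" by simp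
  moreover have "t - Suc (t - Suc k) = k" "t - (t - Suc k) = Suc k" using \<open>k < t\<close> by auto
  ultimately show ?thesis by simp
qed

locale constr =
  fixes \<delta> :: "'q \<Rightarrow> 'a \<Rightarrow> 'q set" and F :: "'q set" and p q :: 'q
    and \<sigma> :: "'q \<Rightarrow> 'q \<Rightarrow> 'a \<Rightarrow> 'q \<Rightarrow> 'q" and \<alpha> :: "'a word" and b :: "nat \<Rightarrow> nat"
    and P :: "nat \<Rightarrow> 'q list"
  assumes legal: "legal_strategy \<delta> \<sigma>"
    and win: "winning_de \<delta> F \<sigma> p q"
    and b0: "b 0 = 0" and bmono: "strict_mono b"
    and path: "\<And>j. is_path \<delta> p (map \<alpha> [b j..<b (Suc j)]) q (P j)"
begin

definition J :: "nat \<Rightarrow> nat" where "J n = (LEAST j. n < b (Suc j))"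

lemma b_ge: "j \<le> b j"
  using bmono by (simp add: strict_mono_imp_increasing)

lemma J_props: "b (J n) \<le> n \<and> n < b (Suc (J n))"
proof -
  have ex: "n < b (Suc n)" using b_ge[of "Suc n"] by simp
  have 1: "n < b (Suc (J n))" unfolding J_def using LeastI[of "\<lambda>j. n < b (Suc j)", OF ex] .
  have "b (J n) \<le> n"
  proof (cases "J n")
    case 0 then show ?thesis using b0 by simp
  next
    case (Suc j)
    have "\<not> n < b (Suc j)"
    proof
      assume "n < b (Suc j)"
      then have "J n \<le> j" unfolding J_def by (rule Least_le)
      then show False using Suc by simp
    qed
    then show ?thesis using Suc by simp
  qed
  with 1 show ?thesis by simp
qed

lemma J_eq: "b j \<le> n \<Longrightarrow> n < b (Suc j) \<Longrightarrow> J n = j"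
proof -
  assume a: "b j \<le> n" "n < b (Suc j)"
  have c: "b (J n) \<le> n" "n < b (Suc (J n))" using J_props by auto
  have "\<not> J n < j"
  proof
    assume "J n < j" then have "Suc (J n) \<le> j" by simp
    then have "b (Suc (J n)) \<le> b j" using bmono by (simp add: strict_mono_less_eq)
    then show False using a c by simp
  qed
  moreover have "\<not> j < J n"
  proof
    assume "j < J n" then have "Suc j \<le> J n" by simp
    then have "b (Suc j) \<le> b (J n)" using bmono by (simp add: strict_mono_less_eq)
    then show False using a c by simp
  qed
  ultimately show ?thesis by simp
qed

lemma J_ge: "b j \<le> n \<Longrightarrow> j \<le> J n"
proof (rule ccontr)
  assume a: "b j \<le> n" "\<not> j \<le> J n"
  then have "Suc (J n) \<le> j" by simp
  then have "b (Suc (J n)) \<le> b j" using bmono by (simp add: strict_mono_less_eq)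
  then show False using a J_props[of n] by simp
qed

primrec S :: "nat \<Rightarrow> nat \<Rightarrow> 'q" where
  "S 0 = (\<lambda>k. if k = 0 then q else p)"
| "S (Suc n) = (\<lambda>k. if k \<le> Suc (J n) then dn \<sigma> (S n) (Suc (J n)) (P (J n) ! (Suc n - b (J n))) (\<alpha> n) (Suc (J n) - k) else p)"

lemma S_top: "S (Suc n) (Suc (J n)) = P (J n) ! (Suc n - b (J n))"
  by simp

lemma S_below: "k \<le> J n \<Longrightarrow> S (Suc n) k = \<sigma> (S n k) (S n (Suc k)) (\<alpha> n) (S (Suc n) (Suc k))"
  using dn_step[of k "Suc (J n)"] by simp

lemma S_above: "Suc (J n) < k \<Longrightarrow> S (Suc n) k = p"
  by simp

declare S.simps(2)[simp del]

lemma P0: "P j ! 0 = p" and Pend: "P j ! (b (Suc j) - b j) = q"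
  using path[of j] unfolding is_path_def by auto

lemma I1: "S n (Suc (J n)) = P (J n) ! (n - b (J n))"
proof (induction n)
  case 0
  have "b 0 < b (Suc 0)" by (rule strict_monoD[OF bmono]) simp
  then have "J 0 = 0" using J_eq[of 0 0] b0 by simp
  then show ?case using P0 b0 by simp
next
  case (Suc n)
  have jp: "b (J n) \<le> n" "n < b (Suc (J n))" using J_props by auto
  show ?case
  proof (cases "Suc n < b (Suc (J n))")
    case True
    then have "J (Suc n) = J n" using jp by (intro J_eq) auto
    then show ?thesis using S_top[of n] by simp
  next
    case False
    then have e: "Suc n = b (Suc (J n))" using jp by simp
    have "b (Suc (J n)) < b (Suc (Suc (J n)))" by (rule strict_monoD[OF bmono]) simp
    then have "J (Suc n) = Suc (J n)" using e by (intro J_eq) auto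
    then show ?thesis using e P0 S_above[of n "Suc (Suc (J n))"] by simp
  qed
qed

lemma S_q: "S (b j) j = q"
proof (cases j)
  case 0 then show ?thesis using b0 by simp
next
  case (Suc i)
  have "b i < b (Suc i)" using bmono by (simp add: strict_mono_def)
  then obtain n where n: "b (Suc i) = Suc n" by (cases "b (Suc i)") auto
  have "J n = i" using n \<open>b i < b (Suc i)\<close> by (intro J_eq) auto
  then show ?thesis using Suc n Pend[of i] S_top[of n] by simp
qed

lemma S_p: "S (b j) (Suc j) = p"
proof -
  have "b j < b (Suc j)" by (rule strict_monoD[OF bmono]) simp
  then have "J (b j) = j" by (intro J_eq) auto
  then show ?thesis using I1[of "b j"] P0 by simp
qed

lemma top_path: "b j \<le> n \<Longrightarrow> n \<le> b (Suc j) \<Longrightarrow> S n (Suc j) = P j ! (n - b j)"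
proof (cases "n = b (Suc j)")
  case True
  then show ?thesis using S_q Pend by simp
next
  case False
  assume "b j \<le> n" "n \<le> b (Suc j)"
  then have "J n = j" using False by (intro J_eq) auto
  have "S n (Suc (J n)) = P (J n) ! (n - b (J n))" by (rule I1)
  then show ?thesis using \<open>J n = j\<close> by simp
qed

lemma I2: "k \<le> Suc (J n) \<Longrightarrow> S (Suc n) k \<in> \<delta> (S n k) (\<alpha> n)"
proof (induction "Suc (J n) - k" arbitrary: k)
  case 0
  then have k: "k = Suc (J n)" by simp
  have jp: "b (J n) \<le> n" "n < b (Suc (J n))" using J_props by auto
  have lt: "n - b (J n) < length (map \<alpha> [b (J n)..<b (Suc (J n))])" using jp by simp
  have "P (J n) ! Suc (n - b (J n)) \<in> \<delta> (P (J n) ! (n - b (J n))) (map \<alpha> [b (J n)..<b (Suc (J n))] ! (n - b (J n)))"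
    using path[of "J n"] lt unfolding is_path_def by blast
  moreover have "map \<alpha> [b (J n)..<b (Suc (J n))] ! (n - b (J n)) = \<alpha> n" using jp by simp
  moreover have "Suc (n - b (J n)) = Suc n - b (J n)" using jp by simp
  ultimately show ?case using k I1[of n] S_top[of n] by simp
next
  case (Suc d)
  then have k: "k \<le> J n" by simp
  have h: "d = Suc (J n) - Suc k" using Suc.hyps(2) by simp
  have "S (Suc n) (Suc k) \<in> \<delta> (S n (Suc k)) (\<alpha> n)" by (rule Suc.hyps(1)[OF h]) (use k in simp)
  then show ?case using S_below[OF k] legal unfolding legal_strategy_def by simp
qed

lemma level_win: "b j \<le> t \<Longrightarrow> S t (Suc j) \<in> F \<Longrightarrow> \<exists>t'\<ge>t. S t' j \<in> F"
proof -
  assume a: "b j \<le> t" "S t (Suc j) \<in> F"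
  define X where "X m = S (b j + m) (Suc j)" for m
  define Y where "Y m = S (b j + m) j" for m
  have run: "is_run \<delta> p (suffix (b j) \<alpha>) X"
    unfolding is_run_def X_def suffix_def
  proof (intro conjI allI)
    show "S (b j + 0) (Suc j) = p" using S_p by simp
    fix i
    have "j \<le> J (b j + i)" using J_ge by simp
    then show "S (b j + Suc i) (Suc j) \<in> \<delta> (S (b j + i) (Suc j)) (\<alpha> (b j + i))"
      using I2[of "Suc j" "b j + i"] by simp
  qed
  have dp: "dup_play \<sigma> q X (suffix (b j) \<alpha>) m = Y m" for m
  proof (induction m)
    case 0 then show ?case unfolding dup_play_def Y_def using S_q by simp
  next
    case (Suc m)
    have "j \<le> J (b j + m)" using J_ge by simp
    then have "S (Suc (b j + m)) j = \<sigma> (S (b j + m) j) (S (b j + m) (Suc j)) (\<alpha> (b j + m)) (S (Suc (b j + m)) (Suc j))"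
      by (rule S_below)
    then show ?case using Suc unfolding dup_play_def Y_def X_def suffix_def by simp
  qed
  have "\<forall>i. X i \<in> F \<longrightarrow> (\<exists>k\<ge>i. Y k \<in> F)"
    using win run dp unfolding winning_de_def Let_def by metis
  moreover have "X (t - b j) \<in> F" using a unfolding X_def by simp
  ultimately obtain k where "k \<ge> t - b j" "Y k \<in> F" by blast
  then show ?thesis unfolding Y_def using a by (intro exI[of _ "b j + k"]) auto
qed

lemma chain: "b j \<le> t \<Longrightarrow> S t (Suc j) \<in> F \<Longrightarrow> \<exists>t'\<ge>t. S t' 0 \<in> F"
proof (induction j arbitrary: t)
  case 0 then show ?case using level_win by blast
next
  case (Suc j)
  obtain t' where t': "t' \<ge> t" "S t' (Suc j) \<in> F" using level_win Suc.prems by blast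
  have "b j \<le> b (Suc j)" using bmono by (simp add: strict_mono_less_eq)
  then have "b j \<le> t'" using t' Suc.prems by simp
  then obtain t'' where "t'' \<ge> t'" "S t'' 0 \<in> F" using Suc.IH t' by blast
  then show ?case using t' by (intro exI[of _ t'']) auto
qed

lemma run0: "is_run \<delta> q \<alpha> (\<lambda>n. S n 0)"
  unfolding is_run_def
proof (intro conjI allI)
  show "S 0 0 = q" by simp
  fix i show "S (Suc i) 0 \<in> \<delta> (S i 0) (\<alpha> i)" by (rule I2) simp
qed

lemma acc0:
  assumes inf: "\<exists>\<^sub>\<infinity>j. \<exists>r\<in>set (P j). r \<in> F"
  shows "\<exists>\<^sub>\<infinity>n. S n 0 \<in> F"
  unfolding INFM_nat_le
proof
  fix m
  obtain j where j: "j \<ge> m" "\<exists>r\<in>set (P j). r \<in> F" using inf unfolding INFM_nat_le by blast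
  then obtain i where i: "i < length (P j)" "P j ! i \<in> F" by (metis in_set_conv_nth)
  have len: "length (P j) = Suc (b (Suc j) - b j)" using path[of j] unfolding is_path_def by simp
  have le: "b j \<le> b (Suc j)" using bmono by (simp add: strict_mono_less_eq)
  have "S (b j + i) (Suc j) = P j ! i" using top_path[of j "b j + i"] i len le by simp
  then obtain t' where "t' \<ge> b j + i" "S t' 0 \<in> F" using chain[of j "b j + i"] i by auto
  moreover have "m \<le> b j" using b_ge[of j] j by simp
  ultimately show "\<exists>n\<ge>m. S n 0 \<in> F" by (intro exI[of _ t']) auto
qed

end


lemma normalize:
  assumes "w \<in> lconc (lstar {w. reach \<delta> p w q}) {w. reachF \<delta> F p w q}" and "w \<noteq> []"
  shows "\<exists>sg. sg \<noteq> [] \<and> (\<forall>s\<in>set sg. s \<noteq> [] \<and> reach \<delta> p s q) \<and> reachF \<delta> F p (last sg) q \<and> concat sg = w"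
proof -
  obtain us v where w: "w = concat us @ v" and us: "set us \<subseteq> {w. reach \<delta> p w q}" and v: "reachF \<delta> F p v q"
    using assms(1) unfolding lconc_def lstar_def by blast
  define us' where "us' = filter (\<lambda>x. x \<noteq> []) us"
  have c: "concat us' = concat us" unfolding us'_def by (induction us) auto
  have us': "\<forall>s\<in>set us'. s \<noteq> [] \<and> reach \<delta> p s q" using us unfolding us'_def by auto
  have vr: "reach \<delta> p v q" using v unfolding reach_def reachF_def by blast
  show ?thesis
  proof (cases "v = []")
    case False
    then show ?thesis using us' v vr c w by (intro exI[of _ "us' @ [v]"]) auto
  next
    case True
    then obtain rs where rs: "is_path \<delta> p [] q rs" "\<exists>r\<in>set rs. r \<in> F" using v unfolding reachF_def by blast
    then have "length rs = 1" "rs ! 0 = p" "rs ! 0 = q" unfolding is_path_def by auto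
    then have pq: "p = q" "q \<in> F" using rs(2) by (auto simp: length_Suc_conv)
    have "us' \<noteq> []" using assms(2) w True c by auto
    then have "last us' \<in> set us'" by simp
    then obtain rs2 where rs2: "is_path \<delta> p (last us') q rs2" using us' unfolding reach_def by blast
    then have "rs2 ! length (last us') \<in> set rs2" "rs2 ! length (last us') = q"
      unfolding is_path_def by auto
    then have "reachF \<delta> F p (last us') q" using rs2 pq unfolding reachF_def by metis
    then show ?thesis using \<open>us' \<noteq> []\<close> us' c w True by (intro exI[of _ us']) auto
  qed
qed

theorem lemma10:
  fixes \<delta> :: "'q::finite \<Rightarrow> 'a::finite \<Rightarrow> 'q set" and F :: "'q set" and p q :: 'q
  assumes "complete_aut \<delta>"
    and "de_sim \<delta> F p q"
  shows "lomega (lconc (lstar {w. reach \<delta> p w q}) {w. reachF \<delta> F p w q}) \<subseteq> lang \<delta> F q"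
proof
  fix \<alpha> assume "\<alpha> \<in> lomega (lconc (lstar {w. reach \<delta> p w q}) {w. reachF \<delta> F p w q})"
  then obtain ws :: "nat \<Rightarrow> 'a list" where
    ws: "\<And>i. ws i \<in> lconc (lstar {w. reach \<delta> p w q}) {w. reachF \<delta> F p w q} \<and> ws i \<noteq> []"
    and pre: "\<And>n. prefix (length (concat (map ws [0..<n]))) \<alpha> = concat (map ws [0..<n])"
    unfolding lomega_def by blast
  have "\<forall>i. \<exists>sg. sg \<noteq> [] \<and> (\<forall>s\<in>set sg. s \<noteq> [] \<and> reach \<delta> p s q) \<and> reachF \<delta> F p (last sg) q \<and> concat sg = ws i"
  proof
    fix i show "\<exists>sg. sg \<noteq> [] \<and> (\<forall>s\<in>set sg. s \<noteq> [] \<and> reach \<delta> p s q) \<and> reachF \<delta> F p (last sg) q \<and> concat sg = ws i"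
      using ws[of i] by (intro normalize) auto
  qed
  from choice[OF this] obtain segs where segs0: "\<forall>i. segs i \<noteq> [] \<and> (\<forall>s\<in>set (segs i). s \<noteq> [] \<and> reach \<delta> p s q)
      \<and> reachF \<delta> F p (last (segs i)) q \<and> concat (segs i) = ws i"
    by blast
  have segs: "segs i \<noteq> []" "\<And>s. s \<in> set (segs i) \<Longrightarrow> s \<noteq> [] \<and> reach \<delta> p s q"
    "reachF \<delta> F p (last (segs i)) q" "concat (segs i) = ws i" for i
    using segs0 by auto
  have CC: "CC segs i = length (concat (map ws [0..<i]))" for i
    by (induction i) (simp_all add: segs(4))
  have alph: "\<alpha> (CC segs i + k) = concat (segs i) ! k" if k: "k < length (concat (segs i))" for i k
  proof -
    have e: "concat (map ws [0..<Suc i]) = concat (map ws [0..<i]) @ ws i" by simp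
    have "prefix (length (concat (map ws [0..<Suc i]))) \<alpha> = concat (map ws [0..<i]) @ ws i"
      using pre[of "Suc i"] e by simp
    moreover have kk: "k < length (ws i)" using k segs(4) by simp
    ultimately have "prefix (length (concat (map ws [0..<Suc i]))) \<alpha> ! (CC segs i + k) = ws i ! k"
      using CC by (simp add: nth_append)
    moreover have "CC segs i + k < length (concat (map ws [0..<Suc i]))" using CC kk e by simp
    ultimately show ?thesis by (simp add: subsequence_def segs(4))
  qed
  interpret fl: flat segs \<alpha>
  proof
    show "segs i \<noteq> []" for i by (rule segs(1))
    show "s \<in> set (segs i) \<Longrightarrow> s \<noteq> []" for i s using segs(2) by blast
    show "k < length (concat (segs i)) \<Longrightarrow> \<alpha> (CC segs i + k) = concat (segs i) ! k" for i k by (rule alph)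
  qed
  obtain \<sigma> where \<sigma>: "legal_strategy \<delta> \<sigma>" "winning_de \<delta> F \<sigma> p q"
    using assms(2) unfolding de_sim_def by blast
  define P where "P j = (SOME rs. is_path \<delta> p (fl.sg j) q rs \<and> (reachF \<delta> F p (fl.sg j) q \<longrightarrow> (\<exists>r\<in>set rs. r \<in> F)))" for j
  have Pp: "is_path \<delta> p (fl.sg j) q (P j) \<and> (reachF \<delta> F p (fl.sg j) q \<longrightarrow> (\<exists>r\<in>set (P j). r \<in> F))" for j
  proof -
    have ex: "\<exists>rs. is_path \<delta> p (fl.sg j) q rs \<and> (reachF \<delta> F p (fl.sg j) q \<longrightarrow> (\<exists>r\<in>set rs. r \<in> F))"
    proof (cases "reachF \<delta> F p (fl.sg j) q")
      case True then show ?thesis unfolding reachF_def by blast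
    next
      case False
      have "reach \<delta> p (fl.sg j) q" using segs(2) fl.sg_in by blast
      then show ?thesis using False unfolding reach_def by blast
    qed
    show ?thesis unfolding P_def by (rule someI_ex[OF ex])
  qed
  interpret c: constr \<delta> F p q \<sigma> \<alpha> fl.bb P
  proof
    show "is_path \<delta> p (map \<alpha> [fl.bb j..<fl.bb (Suc j)]) q (P j)" for j using Pp fl.sg_alpha by simp
  qed (use \<sigma> fl.bb0 fl.bb_mono in auto)
  have inf: "\<exists>\<^sub>\<infinity>j. \<exists>r\<in>set (P j). r \<in> F"
    using fl.last_often
  proof (rule INFM_mono)
    fix j assume "fl.sg j = last (segs (fst (pos segs j)))"
    then have "reachF \<delta> F p (fl.sg j) q" using segs(3) by simp
    then show "\<exists>r\<in>set (P j). r \<in> F" using Pp by blast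
  qed
  have "\<exists>\<^sub>\<infinity>n. c.S n 0 \<in> F" using c.acc0[OF inf] .
  then have "\<exists>x\<in>F. \<exists>\<^sub>\<infinity>n. c.S n 0 = x"
    using INFM_finite_Bex_distrib[of F "\<lambda>x n. c.S n 0 = x"] by simp
  then show "\<alpha> \<in> lang \<delta> F q"
    unfolding lang_def accepting_def using c.run0 by blast
qed

end
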